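(* Let $\Delta_1,\Delta_2,\Delta_3$ be simplicial complexes on $[n]$. For nonempty $A,B\subseteq[n]$ set $\Delta_{A,B}=(A*\Delta_1)\cup(B*\Delta_2)\cup((A\cup B)*\Delta_3)$. If $A,B,A',B'\subseteq[n]$ are nonempty with $A\cap B=\emptyset$, $A'\cap B'=\emptyset$, and neither $A\cup B$ nor $A'\cup B'$ meets the vertex set of $\Delta_1\cup\Delta_2\cup\Delta_3$, then $$\tilde H_i(\Delta_{A,B};\mathbb{K})\cong\tilde H_i(\Delta_{A',B'};\mathbb{K})\quad\text{for all } i>0.$$
   Context: A simplicial complex on $[n]$ is a finite family of subsets of $[n]$ closed under taking subsets (singletons need not belong to it); its vertex set is the union of its faces. For a nonempty $A\subseteq[n]$ and a simplicial complex $\Delta$ on $[n]$, the cone $A*\Delta$ is the simplicial complex whose facets are the sets $A\cup F$ with $F$ a facet of $\Delta$. $\tilde H_i(\,\cdot\,;\mathbb{K})$ denotes reduced simplicial homology with coefficients in the field $\mathbb{K}$. *)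

theory Defs
  imports Main
begin

definition simplicial_complex :: "nat \<Rightarrow> nat set set \<Rightarrow> bool" where
  "simplicial_complex n \<Delta> \<longleftrightarrow> \<Delta> \<subseteq> Pow {1..n} \<and> (\<forall>F\<in>\<Delta>. \<forall>G. G \<subseteq> F \<longrightarrow> G \<in> \<Delta>)"

definition vertex_set :: "nat set set \<Rightarrow> nat set" where
  "vertex_set \<Delta> = \<Union>\<Delta>"

definition cone :: "nat set \<Rightarrow> nat set set \<Rightarrow> nat set set" where
  "cone A \<Delta> = {G. \<exists>F\<in>\<Delta>. G \<subseteq> A \<union> F}"

definition Delta_AB :: "nat set set \<Rightarrow> nat set set \<Rightarrow> nat set set \<Rightarrow> nat set \<Rightarrow> nat set \<Rightarrow> nat set set" where
  "Delta_AB D1 D2 D3 A B = cone A D1 \<union> cone B D2 \<union> cone (A \<union> B) D3"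

text \<open>Simplicial chains with coefficients in a field: a k-chain is a coefficient function on the
  faces with k+1 elements (faces ordered increasingly; the empty face gives the augmentation
  in degree -1, so homology is reduced).\<close>
definition chains :: "nat set set \<Rightarrow> nat \<Rightarrow> (nat set \<Rightarrow> 'k::field) set" where
  "chains \<Delta> k = {c. \<forall>F. c F \<noteq> 0 \<longrightarrow> F \<in> \<Delta> \<and> card F = Suc k}"

definition bd :: "nat set set \<Rightarrow> (nat set \<Rightarrow> 'k::field) \<Rightarrow> nat set \<Rightarrow> 'k" where
  "bd \<Delta> c G = (if G \<in> \<Delta> then
      (\<Sum>v\<in>\<Union>\<Delta> - G. if insert v G \<in> \<Delta>
         then (-1) ^ card {u\<in>G. u < v} * c (insert v G) else 0)
    else 0)"

definition cycles :: "nat set set \<Rightarrow> nat \<Rightarrow> (nat set \<Rightarrow> 'k::field) set" where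
  "cycles \<Delta> k = {c \<in> chains \<Delta> k. bd \<Delta> c = (\<lambda>_. 0)}"

definition boundaries :: "nat set set \<Rightarrow> nat \<Rightarrow> (nat set \<Rightarrow> 'k::field) set" where
  "boundaries \<Delta> k = bd \<Delta> ` chains \<Delta> (Suc k)"

text \<open>Reduced homology in degree k of two complexes are isomorphic as K-vector spaces:
  there is a K-linear map on cycles inducing a bijection Z/B \<rightarrow> Z'/B'.\<close>
definition reduced_homology_iso ::
  "'k::field itself \<Rightarrow> nat set set \<Rightarrow> nat set set \<Rightarrow> nat \<Rightarrow> bool" where
  "reduced_homology_iso K \<Delta> \<Delta>' k \<longleftrightarrow>
    (\<exists>f :: (nat set \<Rightarrow> 'k) \<Rightarrow> (nat set \<Rightarrow> 'k).
       (\<forall>z\<in>cycles \<Delta> k. f z \<in> cycles \<Delta>' k) \<and>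
       (\<forall>a b x y. x \<in> cycles \<Delta> k \<longrightarrow> y \<in> cycles \<Delta> k \<longrightarrow>
          f (\<lambda>F. a * x F + b * y F) = (\<lambda>F. a * f x F + b * f y F)) \<and>
       (\<forall>z'\<in>cycles \<Delta>' k. \<exists>z\<in>cycles \<Delta> k. (\<lambda>F. z' F - f z F) \<in> boundaries \<Delta>' k) \<and>
       (\<forall>z\<in>cycles \<Delta> k. f z \<in> boundaries \<Delta>' k \<longleftrightarrow> z \<in> boundaries \<Delta> k))"

end

theory Submission
  imports Defs
begin


definition sg :: "nat set \<Rightarrow> nat \<Rightarrow> 'k::field" where
  "sg G v = (-1) ^ card {u\<in>G. u < v}"

lemma bd_alt: "bd \<Delta> c G = (if G \<in> \<Delta> then
      (\<Sum>v\<in>\<Union>\<Delta> - G. if insert v G \<in> \<Delta> then sg G v * c (insert v G) else 0) else 0)"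
  unfolding bd_def sg_def by simp

lemma sg_sq: "sg G v * sg G v = (1::'k::field)"
  unfolding sg_def by (simp add: power_mult_distrib[symmetric])

lemma sg_nz: "sg G v \<noteq> (0::'k::field)"
  unfolding sg_def by simp

lemma sg_insert:
  assumes "v \<notin> G"
  shows "sg (insert v G) w = (if v < w then -1 else 1) * (sg G w :: 'k::field)"
proof -
  have fin: "finite {u\<in>G. u < w}" by simp
  show ?thesis
  proof (cases "v < w")
    case True
    hence "{u\<in>insert v G. u < w} = insert v {u\<in>G. u < w}" by auto
    hence "card {u\<in>insert v G. u < w} = Suc (card {u\<in>G. u < w})"
      using assms fin by simp
    thus ?thesis using True unfolding sg_def by simp
  next
    case False
    hence "{u\<in>insert v G. u < w} = {u\<in>G. u < w}" by auto
    thus ?thesis using False unfolding sg_def by simp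
  qed
qed

lemma bd_bd:
  assumes fin: "finite (\<Union>\<Delta>)" and cl: "\<forall>F\<in>\<Delta>. \<forall>G. G \<subseteq> F \<longrightarrow> G \<in> \<Delta>"
  shows "bd \<Delta> (bd \<Delta> (c :: nat set \<Rightarrow> 'k::field)) = (\<lambda>_. 0)"
proof
  fix G
  show "bd \<Delta> (bd \<Delta> c) G = 0"
  proof (cases "G \<in> \<Delta>")
    case False thus ?thesis by (simp add: bd_def)
  next
    case True
    define U where "U = \<Union>\<Delta> - G"
    have finU: "finite U" using fin unfolding U_def by simp
    define T where "T v w = (if insert w (insert v G) \<in> \<Delta>
       then sg G v * sg (insert v G) w * c (insert w (insert v G)) else (0::'k))" for v w
    have 1: "bd \<Delta> (bd \<Delta> c) G = (\<Sum>v\<in>U. \<Sum>w\<in>U - {v}. T v w)"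
    proof -
      have "(if insert v G \<in> \<Delta> then sg G v * bd \<Delta> c (insert v G) else 0)
            = (\<Sum>w\<in>U - {v}. T v w)" if "v \<in> U" for v
      proof (cases "insert v G \<in> \<Delta>")
        case True
        have e: "\<Union>\<Delta> - insert v G = U - {v}" unfolding U_def by auto
        show ?thesis using True unfolding bd_alt[of \<Delta> c "insert v G"] e T_def
          by (auto simp: sum_distrib_left mult.assoc split: if_splits intro!: sum.cong)
      next
        case False
        have "T v w = 0" for w using False cl unfolding T_def by (meson subset_insertI)
        thus ?thesis using False by simp
      qed
      thus ?thesis unfolding bd_alt[of \<Delta> "bd \<Delta> c" G] using True unfolding U_def[symmetric]
        by (simp cong: sum.cong)
    qed
    have anti: "T w v = - T v w" if "v \<noteq> w" "v \<in> U" "w \<in> U" for v w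
    proof -
      have vG: "v \<notin> G" "w \<notin> G" using that unfolding U_def by auto
      have "insert v (insert w G) = insert w (insert v G)" by auto
      moreover have "sg G w * sg (insert w G) v = - (sg G v * sg (insert v G) w :: 'k)"
        using sg_insert[OF vG(1), of w, where 'k='k] sg_insert[OF vG(2), of v, where 'k='k] that(1)
        by (cases "v < w") (auto simp: mult.commute)
      ultimately show ?thesis unfolding T_def by auto
    qed
    have split: "(\<Sum>v\<in>U. \<Sum>w\<in>U - {v}. T v w) =
       (\<Sum>v\<in>U. \<Sum>w\<in>U - {v}. if v < w then T v w else 0) +
       (\<Sum>v\<in>U. \<Sum>w\<in>U - {v}. if w < v then T v w else 0)"
      unfolding sum.distrib[symmetric]
      by (rule sum.cong[OF refl], rule sum.cong[OF refl]) auto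
    have e1: "U - {v} = {w\<in>U. v \<noteq> w}" for v by auto
    have sw: "(\<Sum>v\<in>U. \<Sum>w\<in>U - {v}. if w < v then T v w else 0) =
       (\<Sum>w\<in>U. \<Sum>v\<in>U - {w}. if w < v then T v w else 0)"
      unfolding e1 using sum.swap_restrict[OF finU finU, of "\<lambda>v w. if w < v then T v w else 0" "\<lambda>v w. v \<noteq> w"]
      by (simp add: eq_commute)
    also have "\<dots> = (\<Sum>w\<in>U. \<Sum>v\<in>U - {w}. - (if w < v then T w v else 0))"
    proof (rule sum.cong[OF refl], rule sum.cong[OF refl])
      fix w v assume "w \<in> U" "v \<in> U - {w}"
      thus "(if w < v then T v w else 0) = - (if w < v then T w v else 0)"
        using anti[of w v] by auto
    qed
    also have "\<dots> = - (\<Sum>v\<in>U. \<Sum>w\<in>U - {v}. if v < w then T v w else 0)"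
      by (simp add: sum_negf)
    finally show ?thesis using 1 split by simp
  qed
qed



lemma bd_lin: "bd \<Delta> (\<lambda>F. a * x F + b * y F) = (\<lambda>G. a * bd \<Delta> x G + b * bd \<Delta> (y :: nat set \<Rightarrow> 'k::field) G)"
proof (rule ext)
  fix G
  have "(\<Sum>v\<in>\<Union>\<Delta> - G. if insert v G \<in> \<Delta> then sg G v * (a * x (insert v G) + b * y (insert v G)) else 0)
     = (\<Sum>v\<in>\<Union>\<Delta> - G. a * (if insert v G \<in> \<Delta> then sg G v * x (insert v G) else 0)
          + b * (if insert v G \<in> \<Delta> then sg G v * y (insert v G) else 0))"
    by (intro sum.cong) (auto simp: algebra_simps)
  thus "bd \<Delta> (\<lambda>F. a * x F + b * y F) G = a * bd \<Delta> x G + b * bd \<Delta> y G"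
    unfolding bd_alt by (simp add: sum.distrib sum_distrib_left)
qed

lemma bd_diff: "bd \<Delta> (\<lambda>F. x F - y F) = (\<lambda>G. bd \<Delta> x G - bd \<Delta> (y :: nat set \<Rightarrow> 'k::field) G)"
  using bd_lin[of \<Delta> 1 x "-1" y] by simp

lemma bd_add: "bd \<Delta> (\<lambda>F. x F + y F) = (\<lambda>G. bd \<Delta> x G + bd \<Delta> (y :: nat set \<Rightarrow> 'k::field) G)"
  using bd_lin[of \<Delta> 1 x 1 y] by simp

lemma bd_zero: "bd \<Delta> (\<lambda>_. 0::'k::field) = (\<lambda>_. 0)"
  using bd_lin[of \<Delta> 0 "\<lambda>_. (0::'k)" 0 "\<lambda>_. 0"] by simp

lemma chains_lin: "x \<in> chains \<Delta> k \<Longrightarrow> y \<in> chains \<Delta> k \<Longrightarrow> (\<lambda>F. a * x F + b * y F) \<in> chains \<Delta> k"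
  unfolding chains_def by auto (metis add.right_neutral mult_zero_right)+

lemma chains_diff: "x \<in> chains \<Delta> k \<Longrightarrow> y \<in> chains \<Delta> k \<Longrightarrow> (\<lambda>F. x F - y F) \<in> chains \<Delta> k"
  unfolding chains_def by auto (metis diff_self)+

lemma chains_add: "x \<in> chains \<Delta> k \<Longrightarrow> y \<in> chains \<Delta> k \<Longrightarrow> (\<lambda>F. x F + y F) \<in> chains \<Delta> k"
  unfolding chains_def by auto (metis add.right_neutral)+

lemma chains_zero: "(\<lambda>_. 0) \<in> chains \<Delta> k"
  unfolding chains_def by auto

lemma bd_chain:
  assumes "c \<in> chains \<Delta> (Suc k)" and "\<forall>F\<in>\<Delta>. finite F"
  shows "bd \<Delta> c \<in> chains \<Delta> k"
  unfolding chains_def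
proof (intro CollectI allI impI)
  fix G assume nz: "bd \<Delta> c G \<noteq> 0"
  hence G: "G \<in> \<Delta>" unfolding bd_def by (auto split: if_splits)
  have "(\<Sum>v\<in>\<Union>\<Delta> - G. if insert v G \<in> \<Delta> then sg G v * c (insert v G) else 0) \<noteq> 0"
    using nz G unfolding bd_alt by simp
  then obtain v where v0: "v \<in> \<Union>\<Delta> - G" "(if insert v G \<in> \<Delta> then sg G v * c (insert v G) else 0) \<noteq> 0"
    by (rule sum.not_neutral_contains_not_neutral)
  hence v: "v \<in> \<Union>\<Delta> - G" "c (insert v G) \<noteq> 0" by (auto split: if_splits)
  hence "card (insert v G) = Suc (Suc k)" using assms(1) unfolding chains_def by auto
  moreover have "finite G" using G assms(2) by auto
  ultimately show "G \<in> \<Delta> \<and> card G = Suc k" using G v(1) by auto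
qed

lemma bd_sub:
  assumes supp: "\<forall>F. c F \<noteq> 0 \<longrightarrow> F \<in> \<Delta>" and sub: "\<Delta> \<subseteq> \<Delta>'" and fin: "finite (\<Union>\<Delta>')"
    and cl: "\<forall>F\<in>\<Delta>. \<forall>G. G \<subseteq> F \<longrightarrow> G \<in> \<Delta>"
  shows "bd \<Delta>' c = bd \<Delta> (c :: nat set \<Rightarrow> 'k::field)"
proof
  fix G
  show "bd \<Delta>' c G = bd \<Delta> c G"
  proof (cases "G \<in> \<Delta>")
    case True
    define h where "h v = (if insert v G \<in> \<Delta> then sg G v * c (insert v G) else (0::'k))" for v
    have "(\<Sum>v\<in>\<Union>\<Delta>' - G. if insert v G \<in> \<Delta>' then sg G v * c (insert v G) else 0)
        = (\<Sum>v\<in>\<Union>\<Delta>' - G. h v)"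
      unfolding h_def using supp sub by (intro sum.cong refl) auto
    also have "\<dots> = (\<Sum>v\<in>\<Union>\<Delta> - G. h v)"
      using fin sub unfolding h_def by (intro sum.mono_neutral_right) auto
    finally show ?thesis using True sub unfolding bd_alt h_def by auto
  next
    case False
    have "c (insert v G) = 0" for v using False cl supp by (meson subset_insertI)
    thus ?thesis using False unfolding bd_alt by (auto intro!: sum.neutral)
  qed
qed

definition killE :: "nat set set \<Rightarrow> nat \<Rightarrow> nat \<Rightarrow> (nat set \<Rightarrow> 'k::field) \<Rightarrow> nat set \<Rightarrow> 'k" where
  "killE D' a a0 x G = (if a \<in> G \<and> a0 \<in> G \<and> G \<in> D' then sg (G - {a0}) a0 * x (G - {a0}) else 0)"

lemma killE_lin: "killE D' a a0 (\<lambda>F. p * x F + q * y F) = (\<lambda>G. p * killE D' a a0 x G + q * killE D' a a0 y G)"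
  unfolding killE_def by (auto simp: algebra_simps)



locale addv =
  fixes D D' :: "nat set set" and a a0 :: nat
  assumes fin: "finite (\<Union>D')"
    and cl': "\<forall>F\<in>D'. \<forall>G. G \<subseteq> F \<longrightarrow> G \<in> D'"
    and cl: "\<forall>F\<in>D. \<forall>G. G \<subseteq> F \<longrightarrow> G \<in> D"
    and sub: "D \<subseteq> D'"
    and bck: "\<forall>G\<in>D'. a \<notin> G \<longrightarrow> G \<in> D"
    and apex: "\<forall>G\<in>D'. a \<in> G \<longrightarrow> insert a0 G \<in> D'"
    and ne: "a \<noteq> a0"
    and anot: "a \<notin> \<Union>D"
begin

lemma finF: "F \<in> D' \<Longrightarrow> finite F"
  by (rule finite_subset[OF _ fin]) auto

lemma finD: "finite (\<Union>D)"
  by (rule finite_subset[OF _ fin]) (use sub in auto)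

lemma E_chain:
  assumes "x \<in> chains D' k"
  shows "killE D' a a0 (x :: nat set \<Rightarrow> 'k::field) \<in> chains D' (Suc k)"
  unfolding chains_def
proof (intro CollectI allI impI)
  fix G assume nz: "killE D' a a0 x G \<noteq> 0"
  hence G: "G \<in> D'" "a0 \<in> G" "x (G - {a0}) \<noteq> 0" unfolding killE_def by (auto split: if_splits)
  have "card (G - {a0}) = Suc k" using assms G(3) unfolding chains_def by blast
  moreover have "finite G" by (rule finF[OF G(1)])
  ultimately have "card G = Suc (Suc k)" using G(2) by (metis card.remove)
  thus "G \<in> D' \<and> card G = Suc (Suc k)" using G by auto
qed

lemma kill:
  assumes G: "G \<in> D'" "a \<in> G" "a0 \<notin> G"
  shows "bd D' (killE D' a a0 x) G = (x G :: 'k::field)"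
proof -
  have i: "insert a0 G \<in> D'" using apex G by auto
  have a0U: "a0 \<in> \<Union>D' - G" using i G by auto
  define h where "h v = (if insert v G \<in> D' then sg G v * killE D' a a0 x (insert v G) else 0)" for v
  have "bd D' (killE D' a a0 x) G = (\<Sum>v\<in>\<Union>D' - G. h v)"
    unfolding bd_alt h_def using G by simp
  also have "\<dots> = h a0 + (\<Sum>v\<in>(\<Union>D' - G) - {a0}. h v)"
    using fin a0U by (simp add: sum.remove)
  also have "(\<Sum>v\<in>(\<Union>D' - G) - {a0}. h v) = 0"
    using G unfolding h_def killE_def by (intro sum.neutral) auto
  also have "insert a0 G - {a0} = G" using G by auto
  hence "h a0 = sg G a0 * sg G a0 * x G"
    unfolding h_def killE_def using i G by (simp add: mult.assoc)
  finally show ?thesis by (simp add: sg_sq)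
qed

lemma kill0:
  assumes "a \<in> G" "a0 \<notin> G" "x \<in> chains D' k"
  shows "x G - bd D' (killE D' a a0 x) G = (0 :: 'k::field)"
proof (cases "G \<in> D'")
  case True thus ?thesis using kill[OF True assms(1,2), of x] by simp
next
  case False
  hence "x G = 0" using assms(3) unfolding chains_def by auto
  thus ?thesis using False unfolding bd_alt by simp
qed

lemma supp:
  assumes y: "y \<in> chains D' k" and z1: "\<forall>G. a \<in> G \<and> a0 \<notin> G \<longrightarrow> y G = 0"
    and z2: "\<forall>H. a \<in> H \<longrightarrow> bd D' y H = (0 :: 'k::field)"
  shows "y \<in> chains D k"
  unfolding chains_def
proof (intro CollectI allI impI)
  fix G assume nz: "y G \<noteq> 0"
  hence G: "G \<in> D'" "card G = Suc k" using y unfolding chains_def by auto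
  have "G \<in> D"
  proof (rule ccontr)
    assume nG: "G \<notin> D"
    hence aG: "a \<in> G" using bck G by auto
    hence a0G: "a0 \<in> G" using z1 nz by auto
    define H where "H = G - {a0}"
    have aH: "a \<in> H" "a0 \<notin> H" using aG ne unfolding H_def by auto
    have HD: "H \<in> D'" using cl' G unfolding H_def by auto
    have iH: "insert a0 H = G" using a0G unfolding H_def by auto
    have a0U: "a0 \<in> \<Union>D' - H" using G a0G aH by auto
    define h where "h v = (if insert v H \<in> D' then sg H v * y (insert v H) else 0)" for v
    have "bd D' y H = (\<Sum>v\<in>\<Union>D' - H. h v)"
      unfolding bd_alt h_def using HD by simp
    also have "\<dots> = h a0 + (\<Sum>v\<in>(\<Union>D' - H) - {a0}. h v)"
      using fin a0U by (simp add: sum.remove)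
    also have "(\<Sum>v\<in>(\<Union>D' - H) - {a0}. h v) = 0"
      using aH z1 unfolding h_def by (intro sum.neutral) auto
    also have "h a0 = sg H a0 * y G"
      unfolding h_def using iH G by simp
    finally have "bd D' y H = sg H a0 * y G" by simp
    moreover have "sg H a0 * y G \<noteq> 0" using nz sg_nz by simp
    ultimately show False using z2 aH by simp
  qed
  thus "G \<in> D \<and> card G = Suc k" using G by auto
qed

lemma chains_sub: "x \<in> chains D k \<Longrightarrow> x \<in> chains D' k"
  using sub unfolding chains_def by auto

lemma bd_sub': "x \<in> chains D k \<Longrightarrow> bd D' x = bd D (x :: nat set \<Rightarrow> 'k::field)"
  by (rule bd_sub) (use sub fin cl in \<open>auto simp: chains_def\<close>)

lemma cyc_sub: "z \<in> cycles D k \<Longrightarrow> z \<in> cycles D' (k :: nat)"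
  unfolding cycles_def using chains_sub[of z k] bd_sub'[of z k] by auto

lemma bdbd: "bd D' (bd D' (c :: nat set \<Rightarrow> 'k::field)) = (\<lambda>_. 0)"
  using bd_bd fin cl' by blast

lemma inj:
  assumes z: "z \<in> cycles D k" and zb: "z \<in> boundaries D' k"
  shows "z \<in> boundaries D (k :: nat)"
proof -
  obtain c' where c': "c' \<in> chains D' (Suc k)" "z = bd D' c'"
    using zb unfolding boundaries_def by auto
  define c'' where "c'' = (\<lambda>F. c' F - bd D' (killE D' a a0 c') F)"
  have ch: "c'' \<in> chains D' (Suc k)" unfolding c''_def
    by (intro chains_diff c' bd_chain E_chain) (use finF in auto)
  have k0: "\<forall>G. a \<in> G \<and> a0 \<notin> G \<longrightarrow> c'' G = 0"
    unfolding c''_def using kill0 c'(1) by blast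
  have bdc: "bd D' c'' = z" unfolding c''_def bd_diff bdbd using c' by simp
  have zH: "\<forall>H. a \<in> H \<longrightarrow> bd D' c'' H = 0"
  proof (intro allI impI)
    fix H assume "a \<in> H"
    hence "H \<notin> D" using anot by auto
    thus "bd D' c'' H = 0" using z bdc unfolding cycles_def chains_def by auto
  qed
  have "c'' \<in> chains D (Suc k)" by (rule supp[OF ch k0 zH])
  moreover have "z = bd D c''" using bdc bd_sub'[OF calculation] by simp
  ultimately show ?thesis unfolding boundaries_def by auto
qed

lemma gcyc:
  assumes z: "z \<in> cycles D' k"
  shows "(\<lambda>F. z F - bd D' (killE D' a a0 z) F) \<in> cycles D (k :: nat)"
proof -
  define z'' where "z'' = (\<lambda>F. z F - bd D' (killE D' a a0 z) F)"
  have zc: "z \<in> chains D' k" using z unfolding cycles_def by auto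
  have ch: "z'' \<in> chains D' k" unfolding z''_def
    by (intro chains_diff zc bd_chain E_chain) (use finF in auto)
  have k0: "\<forall>G. a \<in> G \<and> a0 \<notin> G \<longrightarrow> z'' G = 0"
    unfolding z''_def using kill0 zc by blast
  have bdc: "bd D' z'' = (\<lambda>_. 0)" unfolding z''_def bd_diff bdbd using z
    unfolding cycles_def by simp
  have "z'' \<in> chains D k" by (rule supp[OF ch k0]) (simp add: bdc)
  moreover have "bd D z'' = (\<lambda>_. 0)" using bdc bd_sub'[OF calculation] by simp
  ultimately show ?thesis unfolding z''_def[symmetric] cycles_def by auto
qed

theorem iso_fwd: "reduced_homology_iso TYPE('k::field) D D' k"
  unfolding reduced_homology_iso_def
proof (intro exI[of _ "\<lambda>z. z"] conjI ballI allI impI)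
  fix z :: "nat set \<Rightarrow> 'k" assume "z \<in> cycles D k"
  thus "z \<in> cycles D' k" by (rule cyc_sub)
next
  fix z' :: "nat set \<Rightarrow> 'k" assume z': "z' \<in> cycles D' k"
  show "\<exists>z\<in>cycles D k. (\<lambda>F. z' F - z F) \<in> boundaries D' k"
  proof (intro bexI)
    have zc: "z' \<in> chains D' k" using z' unfolding cycles_def by auto
    have e: "(\<lambda>F. z' F - (z' F - bd D' (killE D' a a0 z') F)) = bd D' (killE D' a a0 z')" by simp
    show "(\<lambda>F. z' F - (z' F - bd D' (killE D' a a0 z') F)) \<in> boundaries D' k"
      unfolding boundaries_def e by (rule imageI[OF E_chain[OF zc]])
  qed (rule gcyc[OF z'])
next
  fix z :: "nat set \<Rightarrow> 'k" assume z: "z \<in> cycles D k"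
  show "z \<in> boundaries D' k \<longleftrightarrow> z \<in> boundaries D k"
  proof
    assume "z \<in> boundaries D' k" thus "z \<in> boundaries D k" using inj z by blast
  next
    assume "z \<in> boundaries D k"
    then obtain c where c: "c \<in> chains D (Suc k)" "z = bd D c" unfolding boundaries_def by auto
    have "z = bd D' c" using c bd_sub'[OF c(1)] by simp
    thus "z \<in> boundaries D' k" unfolding boundaries_def using chains_sub[OF c(1)]
      by (rule image_eqI)
  qed
qed simp

theorem iso_bwd: "reduced_homology_iso TYPE('k::field) D' D k"
  unfolding reduced_homology_iso_def
proof (intro exI[of _ "\<lambda>z. (\<lambda>F. z F - bd D' (killE D' a a0 z) F)"] conjI ballI allI impI)
  fix z :: "nat set \<Rightarrow> 'k" assume "z \<in> cycles D' k"
  thus "(\<lambda>F. z F - bd D' (killE D' a a0 z) F) \<in> cycles D k" by (rule gcyc)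
next
  fix p q :: 'k and x y :: "nat set \<Rightarrow> 'k"
  show "(\<lambda>F. p * x F + q * y F - bd D' (killE D' a a0 (\<lambda>F. p * x F + q * y F)) F) =
       (\<lambda>F. p * (x F - bd D' (killE D' a a0 x) F) + q * (y F - bd D' (killE D' a a0 y) F))"
    by (simp add: killE_lin bd_lin algebra_simps)
next
  fix z :: "nat set \<Rightarrow> 'k" assume z: "z \<in> cycles D k"
  have Ez: "killE D' a a0 z = (\<lambda>_. 0)"
  proof
    fix G
    show "killE D' a a0 z G = 0"
    proof (cases "a \<in> G \<and> a0 \<in> G \<and> G \<in> D'")
      case True
      hence "G - {a0} \<notin> D" using anot ne by auto
      hence "z (G - {a0}) = 0" using z unfolding cycles_def chains_def by auto
      thus ?thesis unfolding killE_def by simp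
    qed (auto simp: killE_def)
  qed
  have "(\<lambda>_. 0::'k) = bd D (\<lambda>_. 0)" by (simp add: bd_zero)
  hence "(\<lambda>_. 0::'k) \<in> boundaries D k" unfolding boundaries_def using chains_zero
    by (rule image_eqI)
  hence "(\<lambda>F. z F - (z F - bd D' (killE D' a a0 z) F)) \<in> boundaries D k"
    by (simp add: Ez bd_zero)
  thus "\<exists>za\<in>cycles D' k. (\<lambda>F. z F - (za F - bd D' (killE D' a a0 za) F)) \<in> boundaries D k"
    using cyc_sub[OF z] by blast
next
  fix z :: "nat set \<Rightarrow> 'k" assume z: "z \<in> cycles D' k"
  have zc: "z \<in> chains D' k" using z unfolding cycles_def by auto
  have Ec: "killE D' a a0 z \<in> chains D' (Suc k)" by (rule E_chain[OF zc])
  show "(\<lambda>F. z F - bd D' (killE D' a a0 z) F) \<in> boundaries D k \<longleftrightarrow> z \<in> boundaries D' k"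
  proof
    assume "(\<lambda>F. z F - bd D' (killE D' a a0 z) F) \<in> boundaries D k"
    then obtain c where c: "c \<in> chains D (Suc k)" "(\<lambda>F. z F - bd D' (killE D' a a0 z) F) = bd D c"
      unfolding boundaries_def by auto
    have "z = (\<lambda>F. bd D c F + bd D' (killE D' a a0 z) F)"
    proof
      fix F show "z F = bd D c F + bd D' (killE D' a a0 z) F"
        using fun_cong[OF c(2), of F] by (simp add: diff_eq_eq)
    qed
    also have "\<dots> = bd D' (\<lambda>F. c F + killE D' a a0 z F)"
      unfolding bd_add bd_sub'[OF c(1)] ..
    finally show "z \<in> boundaries D' k" unfolding boundaries_def
      using chains_add[OF chains_sub[OF c(1)] Ec] by (rule image_eqI)
  next
    assume "z \<in> boundaries D' k"
    then obtain c where c: "c \<in> chains D' (Suc k)" "z = bd D' c"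
      unfolding boundaries_def by auto
    have "(\<lambda>F. z F - bd D' (killE D' a a0 z) F) = bd D' (\<lambda>F. c F - killE D' a a0 z F)"
      unfolding bd_diff c(2) ..
    hence "(\<lambda>F. z F - bd D' (killE D' a a0 z) F) \<in> boundaries D' k"
      unfolding boundaries_def using chains_diff[OF c(1) Ec] by (rule image_eqI)
    thus "(\<lambda>F. z F - bd D' (killE D' a a0 z) F) \<in> boundaries D k"
      by (rule inj[OF gcyc[OF z]])
  qed
qed

end



lemma cycles_lin: "x \<in> cycles \<Delta> k \<Longrightarrow> y \<in> cycles \<Delta> k \<Longrightarrow>
   (\<lambda>F. p * x F + q * y F) \<in> cycles \<Delta> (k::nat)"
  for x y :: "nat set \<Rightarrow> 'k::field"
  unfolding cycles_def using chains_lin[of x \<Delta> k y p q] by (simp add: bd_lin)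

lemma bnd_add: "x \<in> boundaries \<Delta> k \<Longrightarrow> y \<in> boundaries \<Delta> k \<Longrightarrow>
   (\<lambda>F. x F + y F) \<in> boundaries \<Delta> (k::nat)"
  for x y :: "nat set \<Rightarrow> 'k::field"
proof -
  assume "x \<in> boundaries \<Delta> k" "y \<in> boundaries \<Delta> k"
  then obtain c1 c2 where c: "c1 \<in> chains \<Delta> (Suc k)" "x = bd \<Delta> c1" "c2 \<in> chains \<Delta> (Suc k)" "y = bd \<Delta> c2"
    unfolding boundaries_def by auto
  have "(\<lambda>F. x F + y F) = bd \<Delta> (\<lambda>F. c1 F + c2 F)" unfolding bd_add c(2,4) ..
  thus ?thesis unfolding boundaries_def using chains_add[OF c(1,3)] by (rule image_eqI)
qed

lemma iso_refl: "reduced_homology_iso TYPE('k::field) X X k"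
  unfolding reduced_homology_iso_def
proof (intro exI[of _ "\<lambda>z. z"] conjI ballI allI impI)
  fix z' :: "nat set \<Rightarrow> 'k" assume "z' \<in> cycles X k"
  moreover have "(\<lambda>F. z' F - z' F) = bd X (\<lambda>_. 0)" by (simp add: bd_zero)
  hence "(\<lambda>F. z' F - z' F) \<in> boundaries X k" unfolding boundaries_def using chains_zero
    by (rule image_eqI)
  ultimately show "\<exists>z\<in>cycles X k. (\<lambda>F. z' F - z F) \<in> boundaries X k" by blast
qed auto

lemma iso_trans:
  assumes "reduced_homology_iso TYPE('k::field) X Y k" "reduced_homology_iso TYPE('k) Y Z k"
  shows "reduced_homology_iso TYPE('k) X Z k"
proof -
  obtain f :: "(nat set \<Rightarrow> 'k) \<Rightarrow> (nat set \<Rightarrow> 'k)" where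
    f1: "\<forall>z\<in>cycles X k. f z \<in> cycles Y k" and
    f2: "\<forall>a b x y. x \<in> cycles X k \<longrightarrow> y \<in> cycles X k \<longrightarrow>
          f (\<lambda>F. a * x F + b * y F) = (\<lambda>F. a * f x F + b * f y F)" and
    f3: "\<forall>z'\<in>cycles Y k. \<exists>z\<in>cycles X k. (\<lambda>F. z' F - f z F) \<in> boundaries Y k" and
    f4: "\<forall>z\<in>cycles X k. f z \<in> boundaries Y k \<longleftrightarrow> z \<in> boundaries X k"
    using assms(1) unfolding reduced_homology_iso_def by blast
  obtain g :: "(nat set \<Rightarrow> 'k) \<Rightarrow> (nat set \<Rightarrow> 'k)" where
    g1: "\<forall>z\<in>cycles Y k. g z \<in> cycles Z k" and
    g2: "\<forall>a b x y. x \<in> cycles Y k \<longrightarrow> y \<in> cycles Y k \<longrightarrow>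
          g (\<lambda>F. a * x F + b * y F) = (\<lambda>F. a * g x F + b * g y F)" and
    g3: "\<forall>z'\<in>cycles Z k. \<exists>z\<in>cycles Y k. (\<lambda>F. z' F - g z F) \<in> boundaries Z k" and
    g4: "\<forall>z\<in>cycles Y k. g z \<in> boundaries Z k \<longleftrightarrow> z \<in> boundaries Y k"
    using assms(2) unfolding reduced_homology_iso_def by blast
  show ?thesis unfolding reduced_homology_iso_def
  proof (intro exI[of _ "\<lambda>z. g (f z)"] conjI ballI allI impI)
    fix z :: "nat set \<Rightarrow> 'k" assume "z \<in> cycles X k" thus "g (f z) \<in> cycles Z k" using f1 g1 by blast
  next
    fix a b :: 'k and x y :: "nat set \<Rightarrow> 'k" assume xy: "x \<in> cycles X k" "y \<in> cycles X k"
    have "g (f (\<lambda>F. a * x F + b * y F)) = g (\<lambda>F. a * f x F + b * f y F)" using f2 xy by simp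
    also have "\<dots> = (\<lambda>F. a * g (f x) F + b * g (f y) F)" using g2 f1 xy by simp
    finally show "g (f (\<lambda>F. a * x F + b * y F)) = (\<lambda>F. a * g (f x) F + b * g (f y) F)" .
  next
    fix z3 :: "nat set \<Rightarrow> 'k" assume z3: "z3 \<in> cycles Z k"
    obtain z2 where z2: "z2 \<in> cycles Y k" "(\<lambda>F. z3 F - g z2 F) \<in> boundaries Z k" using g3 z3 by blast
    obtain z1 where z1: "z1 \<in> cycles X k" "(\<lambda>F. z2 F - f z1 F) \<in> boundaries Y k" using f3 z2 by blast
    have fz1: "f z1 \<in> cycles Y k" using f1 z1 by blast
    have d: "(\<lambda>F. z2 F - f z1 F) = (\<lambda>F. 1 * z2 F + (-1) * f z1 F)" by simp
    have dc: "(\<lambda>F. z2 F - f z1 F) \<in> cycles Y k" unfolding d by (rule cycles_lin[OF z2(1) fz1])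
    have "g (\<lambda>F. z2 F - f z1 F) = (\<lambda>F. 1 * g z2 F + (-1) * g (f z1) F)"
      unfolding d using g2 z2(1) fz1 by blast
    hence gd: "g (\<lambda>F. z2 F - f z1 F) = (\<lambda>F. g z2 F - g (f z1) F)" by simp
    have "(\<lambda>F. g z2 F - g (f z1) F) \<in> boundaries Z k" unfolding gd[symmetric] using g4 dc z1(2) by blast
    from bnd_add[OF z2(2) this]
    have "(\<lambda>F. z3 F - g (f z1) F) \<in> boundaries Z k" by simp
    thus "\<exists>z\<in>cycles X k. (\<lambda>F. z3 F - g (f z) F) \<in> boundaries Z k" using z1(1) by blast
  next
    fix z :: "nat set \<Rightarrow> 'k" assume "z \<in> cycles X k"
    thus "g (f z) \<in> boundaries Z k \<longleftrightarrow> z \<in> boundaries X k" using f1 f4 g4 by blast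
  qed
qed

definition iso2 :: "'k::field itself \<Rightarrow> nat set set \<Rightarrow> nat set set \<Rightarrow> bool" where
  "iso2 K X Y \<longleftrightarrow> (\<forall>k. reduced_homology_iso K X Y k \<and> reduced_homology_iso K Y X k)"

lemma iso2_refl: "iso2 TYPE('k::field) X X"
  unfolding iso2_def using iso_refl by blast

lemma iso2_sym: "iso2 TYPE('k::field) X Y \<Longrightarrow> iso2 TYPE('k) Y X"
  unfolding iso2_def by blast

lemma iso2_trans: "iso2 TYPE('k::field) X Y \<Longrightarrow> iso2 TYPE('k) Y Z \<Longrightarrow> iso2 TYPE('k) X Z"
  unfolding iso2_def using iso_trans by blast

lemma Delta_swap: "Delta_AB D1 D2 D3 A B = Delta_AB D2 D1 D3 B A"
  unfolding Delta_AB_def by (auto simp: Un_commute)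

lemma cone_cl: "F \<in> cone X D \<Longrightarrow> G \<subseteq> F \<Longrightarrow> G \<in> cone X D"
  unfolding cone_def by auto

lemma Union_cone: "\<Union>(cone X D) \<subseteq> X \<union> \<Union>D"
proof
  fix v assume "v \<in> \<Union>(cone X D)"
  then obtain G F where "v \<in> G" "F \<in> D" "G \<subseteq> X \<union> F" unfolding cone_def by auto
  thus "v \<in> X \<union> \<Union>D" by auto
qed

lemma cone_mono: "X \<subseteq> Y \<Longrightarrow> cone X D \<subseteq> cone Y D"
  unfolding cone_def by auto

lemma cone_back: "G \<in> cone (insert a X) D \<Longrightarrow> a \<notin> G \<Longrightarrow> G \<in> cone X D"
  unfolding cone_def by auto

lemma cone_ins: "G \<in> cone X D \<Longrightarrow> a0 \<in> X \<Longrightarrow> insert a0 G \<in> cone X D"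
  unfolding cone_def by auto

lemma cone_a: "G \<in> cone X D \<Longrightarrow> a \<in> G \<Longrightarrow> a \<notin> X \<Longrightarrow> a \<notin> \<Union>D \<Longrightarrow> False"
  using Union_cone by blast

lemma add_step:
  assumes fA: "finite A" and fB: "finite B" and Ane: "A \<noteq> {}" and aA: "a \<notin> A" and aB: "a \<notin> B"
    and a1: "a \<notin> \<Union>D1" and a2: "a \<notin> \<Union>D2" and a3: "a \<notin> \<Union>D3"
    and f1: "finite (\<Union>D1)" and f2: "finite (\<Union>D2)" and f3: "finite (\<Union>D3)"
  shows "iso2 TYPE('k::field) (Delta_AB D1 D2 D3 A B) (Delta_AB D1 D2 D3 (insert a A) B)"
proof -
  obtain a0 where a0: "a0 \<in> A" using Ane by auto
  let ?D = "Delta_AB D1 D2 D3 A B" and ?D' = "Delta_AB D1 D2 D3 (insert a A) B"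
  have "\<Union>?D' \<subseteq> (insert a A \<union> \<Union>D1) \<union> (B \<union> \<Union>D2) \<union> (insert a A \<union> B \<union> \<Union>D3)"
    unfolding Delta_AB_def Union_Un_distrib using Union_cone
    by (meson Un_mono)
  hence fin: "finite (\<Union>?D')" by (rule finite_subset) (simp add: fA fB f1 f2 f3)
  have cl': "\<forall>F\<in>?D'. \<forall>G. G \<subseteq> F \<longrightarrow> G \<in> ?D'"
    unfolding Delta_AB_def using cone_cl by blast
  have cl: "\<forall>F\<in>?D. \<forall>G. G \<subseteq> F \<longrightarrow> G \<in> ?D"
    unfolding Delta_AB_def using cone_cl by blast
  have sub: "?D \<subseteq> ?D'" unfolding Delta_AB_def
    using cone_mono[of A "insert a A" D1] cone_mono[of "A \<union> B" "insert a A \<union> B" D3] by auto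
  have bck: "\<forall>G\<in>?D'. a \<notin> G \<longrightarrow> G \<in> ?D" unfolding Delta_AB_def
    using cone_back[of _ a A D1] cone_back[of _ a "A \<union> B" D3] by auto
  have apex: "\<forall>G\<in>?D'. a \<in> G \<longrightarrow> insert a0 G \<in> ?D'"
    unfolding Delta_AB_def
    using a0 cone_ins[of _ "insert a A" D1 a0] cone_ins[of _ "insert a A \<union> B" D3 a0] cone_a[of _ B D2 a] aB a2
    by auto
  have ne: "a \<noteq> a0" using a0 aA by auto
  have anot: "a \<notin> \<Union>?D" unfolding Delta_AB_def Union_Un_distrib
    using aA aB a1 a2 a3 Union_cone[of A D1] Union_cone[of B D2] Union_cone[of "A \<union> B" D3] by blast
  interpret addv ?D ?D' a a0
    by unfold_locales (fact fin cl' cl sub bck apex ne anot)+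
  show ?thesis unfolding iso2_def using iso_fwd iso_bwd by blast
qed

lemma grow:
  assumes fX: "finite X"
  shows "finite A \<Longrightarrow> finite B \<Longrightarrow> A \<noteq> {} \<Longrightarrow> X \<inter> B = {} \<Longrightarrow>
    X \<inter> \<Union>D1 = {} \<Longrightarrow> X \<inter> \<Union>D2 = {} \<Longrightarrow> X \<inter> \<Union>D3 = {} \<Longrightarrow>
    finite (\<Union>D1) \<Longrightarrow> finite (\<Union>D2) \<Longrightarrow> finite (\<Union>D3) \<Longrightarrow>
    iso2 TYPE('k::field) (Delta_AB D1 D2 D3 A B) (Delta_AB D1 D2 D3 (A \<union> X) B)"
  using fX
proof (induction X rule: finite_induct)
  case empty thus ?case using iso2_refl by simp
next
  case (insert x X)
  have IH: "iso2 TYPE('k) (Delta_AB D1 D2 D3 A B) (Delta_AB D1 D2 D3 (A \<union> X) B)"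
    using insert by auto
  show ?case
  proof (cases "x \<in> A \<union> X")
    case True
    hence "A \<union> insert x X = A \<union> X" by auto
    thus ?thesis using IH by simp
  next
    case False
    have "iso2 TYPE('k) (Delta_AB D1 D2 D3 (A \<union> X) B) (Delta_AB D1 D2 D3 (insert x (A \<union> X)) B)"
      by (rule add_step) (use insert False in auto)
    thus ?thesis using IH iso2_trans by (metis Un_insert_right)
  qed
qed

lemma to_std:
  assumes fA: "finite A" and fB: "finite B" and Ane: "A \<noteq> {}" and Bne: "B \<noteq> {}"
    and AB: "A \<inter> B = {}"
    and V: "(A \<union> B) \<inter> (\<Union>D1 \<union> \<Union>D2 \<union> \<Union>D3) = {}"
    and c: "c \<notin> A \<union> B \<union> \<Union>D1 \<union> \<Union>D2 \<union> \<Union>D3"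
    and d: "d \<notin> A \<union> B \<union> \<Union>D1 \<union> \<Union>D2 \<union> \<Union>D3"
    and cd: "c \<noteq> d"
    and f1: "finite (\<Union>D1)" and f2: "finite (\<Union>D2)" and f3: "finite (\<Union>D3)"
  shows "iso2 TYPE('k::field) (Delta_AB D1 D2 D3 A B) (Delta_AB D1 D2 D3 {c} {d})"
proof -
  have s1: "iso2 TYPE('k) (Delta_AB D1 D2 D3 A B) (Delta_AB D1 D2 D3 (A \<union> {c}) B)"
    by (rule grow) (use assms in auto)
  have s2: "iso2 TYPE('k) (Delta_AB D1 D2 D3 {c} B) (Delta_AB D1 D2 D3 ({c} \<union> A) B)"
    by (rule grow) (use assms in auto)
  have "A \<union> {c} = {c} \<union> A" by auto
  hence s12: "iso2 TYPE('k) (Delta_AB D1 D2 D3 A B) (Delta_AB D1 D2 D3 {c} B)"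
    using s1 s2 iso2_trans iso2_sym by metis
  have s3: "iso2 TYPE('k) (Delta_AB D2 D1 D3 B {c}) (Delta_AB D2 D1 D3 (B \<union> {d}) {c})"
    by (rule grow) (use assms in auto)
  have s4: "iso2 TYPE('k) (Delta_AB D2 D1 D3 {d} {c}) (Delta_AB D2 D1 D3 ({d} \<union> B) {c})"
    by (rule grow) (use assms in auto)
  have "B \<union> {d} = {d} \<union> B" by auto
  hence s34: "iso2 TYPE('k) (Delta_AB D2 D1 D3 B {c}) (Delta_AB D2 D1 D3 {d} {c})"
    using s3 s4 iso2_trans iso2_sym by metis
  show ?thesis using s12 s34 iso2_trans Delta_swap by metis
qed


theorem proposition3p4:
  fixes n :: nat and D1 D2 D3 :: "nat set set" and A B A' B' :: "nat set" and i :: nat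
  assumes "simplicial_complex n D1" "simplicial_complex n D2" "simplicial_complex n D3"
    and "A \<noteq> {}" "B \<noteq> {}" "A' \<noteq> {}" "B' \<noteq> {}"
    and "A \<subseteq> {1..n}" "B \<subseteq> {1..n}" "A' \<subseteq> {1..n}" "B' \<subseteq> {1..n}"
    and "A \<inter> B = {}" "A' \<inter> B' = {}"
    and "(A \<union> B) \<inter> vertex_set (D1 \<union> D2 \<union> D3) = {}"
    and "(A' \<union> B') \<inter> vertex_set (D1 \<union> D2 \<union> D3) = {}"
    and "i > 0"
  shows "reduced_homology_iso TYPE('k::field) (Delta_AB D1 D2 D3 A B) (Delta_AB D1 D2 D3 A' B') i"
proof -
  have V: "vertex_set (D1 \<union> D2 \<union> D3) = \<Union>D1 \<union> \<Union>D2 \<union> \<Union>D3"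
    by (simp add: vertex_set_def)
  have u1: "\<Union>D1 \<subseteq> {1..n}" using assms(1) unfolding simplicial_complex_def by blast
  have u2: "\<Union>D2 \<subseteq> {1..n}" using assms(2) unfolding simplicial_complex_def by blast
  have u3: "\<Union>D3 \<subseteq> {1..n}" using assms(3) unfolding simplicial_complex_def by blast
  have f1: "finite (\<Union>D1)" using u1 finite_subset by blast
  have f2: "finite (\<Union>D2)" using u2 finite_subset by blast
  have f3: "finite (\<Union>D3)" using u3 finite_subset by blast
  have fin: "finite A" "finite B" "finite A'" "finite B'"
    using assms(8-11) finite_subset by blast+
  have c: "Suc n \<notin> {1..n}" "Suc (Suc n) \<notin> {1..n}" by auto
  have 1: "iso2 TYPE('k) (Delta_AB D1 D2 D3 A B) (Delta_AB D1 D2 D3 {Suc n} {Suc (Suc n)})"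
    by (rule to_std) (use assms(4,5,8,9,12,14) V u1 u2 u3 f1 f2 f3 fin c in auto)
  have 2: "iso2 TYPE('k) (Delta_AB D1 D2 D3 A' B') (Delta_AB D1 D2 D3 {Suc n} {Suc (Suc n)})"
    by (rule to_std) (use assms(6,7,10,11,13,15) V u1 u2 u3 f1 f2 f3 fin c in auto)
  have "iso2 TYPE('k) (Delta_AB D1 D2 D3 A B) (Delta_AB D1 D2 D3 A' B')"
    using iso2_trans[OF 1 iso2_sym[OF 2]] .
  thus ?thesis unfolding iso2_def by blast
qed

end
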